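(* Let $A$ be a graded Frobenius algebra of Gorenstein parameter $-\ell$. For $0\le i,j\le\ell$, the map $A_{j-i}\to\mathrm{Hom}_{A^o}(A_{\ge i}(i),A_{\ge j}(j))$, $a\mapsto(\,\cdot\,a)$ (right multiplication by $a$), is an isomorphism.
   Context: Graded algebras are $\mathbb{N}$-graded algebras over an algebraically closed field $k$; $A_m=0$ for $m<0$. $M(n)_m=M_{n+m}$, $A_{\ge i}=\bigoplus_{m\ge i}A_m$, $D(M)=\bigoplus_m\mathrm{Hom}_k(M_{-m},k)$. $A$ is graded Frobenius of Gorenstein parameter $-\ell$ if it is locally finite and $D(A)\cong A(\ell)$ as graded right $A$-modules. $\mathrm{Hom}_{A^o}$ denotes degree-preserving homomorphisms of graded left $A$-modules. *)

theory Defs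
  imports Main "HOL-Computational_Algebra.Polynomial"
begin

definition alg_closed :: "'k::field itself \<Rightarrow> bool" where
  "alg_closed _ \<longleftrightarrow> (\<forall>p :: 'k poly. degree p > 0 \<longrightarrow> (\<exists>x. poly p x = 0))"

definition k_algebra :: "('k::field \<Rightarrow> 'a::ring_1 \<Rightarrow> 'a) \<Rightarrow> bool" where
  "k_algebra scale \<longleftrightarrow> vector_space scale \<and>
     (\<forall>c x y. scale c (x * y) = scale c x * y \<and> scale c (x * y) = x * scale c y)"

definition hom_family :: "(int \<Rightarrow> 'a::ring_1 set) \<Rightarrow> (int \<Rightarrow> 'a) \<Rightarrow> bool" where
  "hom_family G c \<longleftrightarrow> finite {m. c m \<noteq> 0} \<and> (\<forall>m. c m \<in> G m)"

definition graded_algebra ::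
  "('k::field \<Rightarrow> 'a::ring_1 \<Rightarrow> 'a) \<Rightarrow> (int \<Rightarrow> 'a set) \<Rightarrow> bool" where
  "graded_algebra scale G \<longleftrightarrow> k_algebra scale \<and>
     (\<forall>m. module.subspace scale (G m)) \<and>
     (\<forall>m. m < 0 \<longrightarrow> G m = {0}) \<and>
     (\<forall>x. \<exists>!c. hom_family G c \<and> x = (\<Sum>m\<in>{m. c m \<noteq> 0}. c m)) \<and>
     (\<forall>m n x y. x \<in> G m \<longrightarrow> y \<in> G n \<longrightarrow> x * y \<in> G (m + n)) \<and>
     1 \<in> G 0"

definition locally_finite ::
  "('k::field \<Rightarrow> 'a::ring_1 \<Rightarrow> 'a) \<Rightarrow> (int \<Rightarrow> 'a set) \<Rightarrow> bool" where
  "locally_finite scale G \<longleftrightarrow>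
     (\<forall>m. \<exists>B. finite B \<and> B \<subseteq> G m \<and> module.span scale B = G m)"

definition kdual :: "('k::field \<Rightarrow> 'a::ring_1 \<Rightarrow> 'a) \<Rightarrow> 'a set \<Rightarrow> ('a \<Rightarrow> 'k) set" where
  "kdual scale V = {\<phi>. (\<forall>x\<in>V. \<forall>y\<in>V. \<phi> (x + y) = \<phi> x + \<phi> y) \<and>
                       (\<forall>c. \<forall>x\<in>V. \<phi> (scale c x) = c * \<phi> x) \<and>
                       (\<forall>x. x \<notin> V \<longrightarrow> \<phi> x = 0)}"

text \<open>Graded Frobenius of Gorenstein parameter -l: locally finite, and
  D(A) \<cong> A(l) as graded right A-modules.  Degreewise, A(l)_m = G (l + m) and
  D(A)_m = Hom_k(G (-m), k); the right A-action on D(A) is (\<phi> a)(x) = \<phi> (a x).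
  A graded isomorphism is a family of bijections theta m : A(l)_m \<rightarrow> D(A)_m which is
  additive, k-linear and compatible with the right A-action.\<close>
definition graded_frobenius ::
  "('k::field \<Rightarrow> 'a::ring_1 \<Rightarrow> 'a) \<Rightarrow> (int \<Rightarrow> 'a set) \<Rightarrow> int \<Rightarrow> bool" where
  "graded_frobenius scale G l \<longleftrightarrow> graded_algebra scale G \<and> locally_finite scale G \<and>
     (\<exists>\<theta> :: int \<Rightarrow> 'a \<Rightarrow> ('a \<Rightarrow> 'k).
        (\<forall>m. bij_betw (\<theta> m) (G (l + m)) (kdual scale (G (- m)))) \<and>
        (\<forall>m. \<forall>b\<in>G (l + m). \<forall>b'\<in>G (l + m). \<theta> m (b + b') = (\<lambda>x. \<theta> m b x + \<theta> m b' x)) \<and>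
        (\<forall>m c. \<forall>b\<in>G (l + m). \<theta> m (scale c b) = (\<lambda>x. c * \<theta> m b x)) \<and>
        (\<forall>m n. \<forall>b\<in>G (l + m). \<forall>a\<in>G n.
            \<theta> (m + n) (b * a) = (\<lambda>x. if x \<in> G (- (m + n)) then \<theta> m b (a * x) else 0)))"

definition A_ge :: "(int \<Rightarrow> 'a::ring_1 set) \<Rightarrow> int \<Rightarrow> 'a set" where
  "A_ge G i = {x. \<exists>c. hom_family G c \<and> (\<forall>m. m < i \<longrightarrow> c m = 0) \<and>
                      x = (\<Sum>m\<in>{m. c m \<noteq> 0}. c m)}"

text \<open>Hom_{A^o}(A_{\<ge> i}(i), A_{\<ge> j}(j)): degree preserving homomorphisms of graded
  left A-modules.  The m-th component of A_{\<ge> i}(i) is G (i + m) (m \<ge> 0).  Maps are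
  represented as functions on the carrier A_{\<ge> i}, extended by 0 outside.\<close>
definition graded_left_hom ::
  "('k::field \<Rightarrow> 'a::ring_1 \<Rightarrow> 'a) \<Rightarrow> (int \<Rightarrow> 'a set) \<Rightarrow> int \<Rightarrow> int \<Rightarrow> ('a \<Rightarrow> 'a) set" where
  "graded_left_hom scale G i j = {f.
     (\<forall>x\<in>A_ge G i. f x \<in> A_ge G j) \<and>
     (\<forall>x\<in>A_ge G i. \<forall>y\<in>A_ge G i. f (x + y) = f x + f y) \<and>
     (\<forall>c. \<forall>x\<in>A_ge G i. f (scale c x) = scale c (f x)) \<and>
     (\<forall>b. \<forall>x\<in>A_ge G i. f (b * x) = b * f x) \<and>
     (\<forall>m. \<forall>x\<in>A_ge G i. x \<in> G (i + m) \<longrightarrow> f x \<in> G (j + m)) \<and>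
     (\<forall>x. x \<notin> A_ge G i \<longrightarrow> f x = 0)}"

definition rmult :: "(int \<Rightarrow> 'a::ring_1 set) \<Rightarrow> int \<Rightarrow> 'a \<Rightarrow> 'a \<Rightarrow> 'a" where
  "rmult G i a = (\<lambda>x. if x \<in> A_ge G i then x * a else 0)"

end

theory Submission
  imports Defs
begin

context vector_space begin

lemma exists_functional:
  assumes V: "span B = V" and w: "w \<in> V" "w \<noteq> 0"
  shows "\<exists>\<psi>. (\<forall>x\<in>V. \<forall>y\<in>V. \<psi> (x + y) = \<psi> x + \<psi> y) \<and> (\<forall>c. \<forall>x\<in>V. \<psi> (c *s x) = c * \<psi> x)
             \<and> (\<forall>x. x \<notin> V \<longrightarrow> \<psi> x = 0) \<and> \<psi> w \<noteq> 0"
proof -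
  have sV: "subspace V" using V by auto
  have "{w} \<subseteq> V" "independent {w}" using w by auto
  then obtain Bs where Bs: "{w} \<subseteq> Bs" "Bs \<subseteq> V" "independent Bs" "V \<subseteq> span Bs"
    by (rule maximal_independent_subset_extend)
  have sp: "span Bs = V" using Bs sV span_minimal by blast
  define \<psi> where "\<psi> = (\<lambda>v. if v \<in> V then representation Bs v w else 0)"
  have "\<forall>x\<in>V. \<forall>y\<in>V. \<psi> (x + y) = \<psi> x + \<psi> y"
    using representation_add[OF Bs(3)] sp sV unfolding \<psi>_def
    by (simp add: subspace_add)
  moreover have "\<forall>c. \<forall>x\<in>V. \<psi> (c *s x) = c * \<psi> x"
    using representation_scale[OF Bs(3)] sp sV unfolding \<psi>_def
    by (simp add: subspace_scale)
  moreover have "\<psi> w \<noteq> 0"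
    using representation_basis[OF Bs(3)] Bs(1) w unfolding \<psi>_def by auto
  moreover have "\<forall>x. x \<notin> V \<longrightarrow> \<psi> x = 0" unfolding \<psi>_def by auto
  ultimately show ?thesis by blast
qed

lemma inj_imp_surj_on:
  assumes B: "finite B" "span B = V"
    and add: "\<forall>x\<in>V. \<forall>y\<in>V. S (x + y) = S x + S y"
    and sc: "\<forall>c. \<forall>x\<in>V. S (c *s x) = c *s S x"
    and into: "S ` V \<subseteq> V" and inj: "inj_on S V"
  shows "S ` V = V"
proof -
  have sV: "subspace V" using B by auto
  have S0: "S 0 = 0" using add subspace_0[OF sV] by (metis add_cancel_right_right)
  have simg: "subspace (S ` W)" if W: "subspace W" "W \<subseteq> V" for W
  proof (rule subspaceI)
    show "0 \<in> S ` W" using S0 subspace_0[OF W(1)] by (metis image_eqI)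
    show "x + y \<in> S ` W" if xy: "x \<in> S ` W" "y \<in> S ` W" for x y
    proof -
      obtain a where "a \<in> W" "x = S a" using xy(1) by auto
      moreover obtain b where "b \<in> W" "y = S b" using xy(2) by auto
      ultimately show ?thesis using W add by (metis image_eqI subsetD subspace_add)
    qed
    show "c *s x \<in> S ` W" if xw: "x \<in> S ` W" for c x
    proof -
      obtain a where "a \<in> W" "x = S a" using xw by auto
      thus ?thesis using W sc by (metis image_eqI subsetD subspace_scale)
    qed
  qed
  obtain Bs where Bs: "{} \<subseteq> Bs" "Bs \<subseteq> V" "independent Bs" "V \<subseteq> span Bs"
    using maximal_independent_subset_extend[of "{}" V] by (metis empty_subsetI independent_empty)
  have fBs: "finite Bs" "card Bs \<le> card B"
    using independent_span_bound[OF B(1) Bs(3)] Bs(2) B span_superset by blast+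
  define T where "T = S ` Bs"
  have spsub: "span (S ` X) \<subseteq> S ` span X" if "X \<subseteq> V" for X
  proof (rule span_minimal)
    show "S ` X \<subseteq> S ` span X" using span_superset by blast
    have "span X \<subseteq> V" using that sV span_minimal by blast
    then show "subspace (S ` span X)" using simg by auto
  qed
  have indT: "independent T"
  proof
    assume "dependent T"
    then obtain a where a: "a \<in> T" "a \<in> span (T - {a})" unfolding dependent_def by blast
    then obtain b where b: "b \<in> Bs" "a = S b" unfolding T_def by blast
    have "T - {a} = S ` (Bs - {b})"
      unfolding T_def using b inj Bs(2) by (auto simp: inj_on_def)
    hence "a \<in> S ` span (Bs - {b})" using a spsub[of "Bs - {b}"] Bs(2) by auto
    then obtain y where y: "y \<in> span (Bs - {b})" "S b = S y" using b by auto
    have "span (Bs - {b}) \<subseteq> V" using Bs(2) sV span_minimal by (metis Diff_subset subset_trans)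
    hence "b = y" using inj y b Bs(2) by (auto simp: inj_on_def)
    hence "b \<in> span (Bs - {b})" using y by simp
    thus False using Bs(3) b(1) unfolding dependent_def by blast
  qed
  have cT: "card T = card Bs" unfolding T_def using inj Bs(2) by (metis card_image inj_on_subset)
  have "V \<subseteq> span T"
  proof
    fix v assume v: "v \<in> V"
    show "v \<in> span T"
    proof (rule ccontr)
      assume nv: "v \<notin> span T"
      have "independent (insert v T)" using independent_insertI[OF nv indT] .
      moreover have "insert v T \<subseteq> span Bs" using v Bs into span_superset unfolding T_def by blast
      ultimately have "card (insert v T) \<le> card Bs"
        using independent_span_bound[OF fBs(1)] by blast
      moreover have "v \<notin> T" using nv span_superset by blast
      moreover have "finite T" using fBs unfolding T_def by simp
      ultimately show False using cT by simp
    qed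
  qed
  also have "span T \<subseteq> S ` V"
    by (rule span_minimal) (use Bs(2) simg[OF sV] in \<open>auto simp: T_def\<close>)
  finally show ?thesis using into by blast
qed

end
lemma A_geI:
  assumes z: "\<forall>n. (0::'a::ring_1) \<in> G n" and F: "finite F" and g: "\<forall>m\<in>F. g m \<in> G m \<and> i \<le> m"
  shows "(\<Sum>m\<in>F. g m) \<in> A_ge G i"
proof -
  define c where "c = (\<lambda>n. if n \<in> F then g n else 0)"
  have sub: "{n. c n \<noteq> 0} \<subseteq> F" unfolding c_def by auto
  have "hom_family G c" unfolding hom_family_def c_def
    using finite_subset[OF sub F] z g unfolding c_def by auto
  moreover have "\<forall>m. m < i \<longrightarrow> c m = 0" using g unfolding c_def by force
  moreover have "(\<Sum>m\<in>F. g m) = (\<Sum>m\<in>{m. c m \<noteq> 0}. c m)"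
  proof -
    have "(\<Sum>m\<in>{m. c m \<noteq> 0}. c m) = (\<Sum>m\<in>F. c m)"
      by (rule sum.mono_neutral_left[OF F sub]) auto
    also have "\<dots> = (\<Sum>m\<in>F. g m)" unfolding c_def by simp
    finally show ?thesis by simp
  qed
  ultimately show ?thesis unfolding A_ge_def by blast
qed

lemma A_geE:
  assumes "x \<in> A_ge G i"
  obtains F g where "finite F" "\<forall>m\<in>F. g m \<in> G m \<and> i \<le> m" "x = (\<Sum>m\<in>F. g m)"
proof -
  obtain c where c: "hom_family G c" "\<forall>m. m < i \<longrightarrow> c m = 0" "x = (\<Sum>m\<in>{m. c m \<noteq> 0}. c m)"
    using assms unfolding A_ge_def by blast
  show ?thesis
    by (rule that[of "{m. c m \<noteq> 0}" c]) (use c in \<open>auto simp: hom_family_def not_less[symmetric]\<close>)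
qed

lemma G_sub_A_ge:
  assumes z: "\<forall>n. (0::'a::ring_1) \<in> G n" and "x \<in> G m" "i \<le> m"
  shows "x \<in> A_ge G i"
  using A_geI[OF z, of "{m}" "\<lambda>_. x" i] assms by auto

lemma A_ge_add:
  assumes z: "\<forall>n. (0::'a::ring_1) \<in> G n" and addG: "\<forall>n a b. a \<in> G n \<longrightarrow> b \<in> G n \<longrightarrow> a + b \<in> G n"
    and x: "x \<in> A_ge G i" and y: "y \<in> A_ge G i"
  shows "x + y \<in> A_ge G i"
proof -
  obtain F g where F: "finite F" "\<forall>m\<in>F. g m \<in> G m \<and> i \<le> m" "x = (\<Sum>m\<in>F. g m)"
    using x by (rule A_geE)
  obtain F' g' where F': "finite F'" "\<forall>m\<in>F'. g' m \<in> G m \<and> i \<le> m" "y = (\<Sum>m\<in>F'. g' m)"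
    using y by (rule A_geE)
  define h where "h = (\<lambda>m. (if m \<in> F then g m else 0) + (if m \<in> F' then g' m else 0))"
  have "x = (\<Sum>m\<in>F \<union> F'. if m \<in> F then g m else 0)"
    using F F' by (simp add: sum.If_cases Int_absorb1)
  moreover have "y = (\<Sum>m\<in>F \<union> F'. if m \<in> F' then g' m else 0)"
    using F' F by (simp add: sum.If_cases Int_absorb1 Int_commute)
  ultimately have "x + y = (\<Sum>m\<in>F \<union> F'. h m)" unfolding h_def by (simp add: sum.distrib)
  moreover have "(\<Sum>m\<in>F \<union> F'. h m) \<in> A_ge G i"
    by (rule A_geI[OF z]) (use F F' z addG in \<open>auto simp: h_def\<close>)
  ultimately show ?thesis by simp
qed

lemma A_ge_sum:
  assumes z: "\<forall>n. (0::'a::ring_1) \<in> G n" and addG: "\<forall>n a b. a \<in> G n \<longrightarrow> b \<in> G n \<longrightarrow> a + b \<in> G n"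
    and "finite I" "\<forall>k\<in>I. h k \<in> A_ge G i"
  shows "sum h I \<in> A_ge G i"
  using assms(3,4)
proof (induction I rule: finite_induct)
  case empty
  then show ?case using A_geI[OF z, of "{}"] by simp
next
  case (insert x F)
  then show ?case using A_ge_add[OF z addG] by simp
qed

lemma additive_sum:
  assumes A0: "(0::'a::ring_1) \<in> A" and Aadd: "\<forall>x\<in>A. \<forall>y\<in>A. x + y \<in> A"
    and fadd: "\<forall>x\<in>A. \<forall>y\<in>A. f (x + y) = (f x + f y :: 'b::ring_1)"
    and "finite I" "\<forall>k\<in>I. h k \<in> A"
  shows "f (sum h I) = (\<Sum>k\<in>I. f (h k))" and "sum h I \<in> A"
proof -
  have f0: "f 0 = 0" using fadd A0 by (metis add_cancel_right_right add_0)
  have "f (sum h I) = (\<Sum>k\<in>I. f (h k)) \<and> sum h I \<in> A"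
    using assms(4,5)
  proof (induction I rule: finite_induct)
    case empty then show ?case using f0 A0 by simp
  next
    case (insert x F) then show ?case using fadd Aadd by simp
  qed
  thus "f (sum h I) = (\<Sum>k\<in>I. f (h k))" "sum h I \<in> A" by auto
qed

theorem lemma4p14:
  fixes scale :: "'k::field \<Rightarrow> 'a::ring_1 \<Rightarrow> 'a"
    and G :: "int \<Rightarrow> 'a set"
    and l i j :: int
  assumes "alg_closed TYPE('k)"
    and "graded_frobenius scale G l"
    and "0 \<le> i" and "i \<le> l" and "0 \<le> j" and "j \<le> l"
  shows "bij_betw (rmult G i) (G (j - i)) (graded_left_hom scale G i j)
         \<and> (\<forall>a\<in>G (j - i). \<forall>b\<in>G (j - i). rmult G i (a + b) = (\<lambda>x. rmult G i a x + rmult G i b x))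
         \<and> (\<forall>c. \<forall>a\<in>G (j - i). rmult G i (scale c a) = (\<lambda>x. scale c (rmult G i a x)))"
proof -
  have GA: "graded_algebra scale G" and LF: "locally_finite scale G"
    using assms(2) unfolding graded_frobenius_def by auto
  obtain \<theta> :: "int \<Rightarrow> 'a \<Rightarrow> ('a \<Rightarrow> 'k)" where H:
     "(\<forall>m. bij_betw (\<theta> m) (G (l + m)) (kdual scale (G (- m)))) \<and>
        (\<forall>m. \<forall>b\<in>G (l + m). \<forall>b'\<in>G (l + m). \<theta> m (b + b') = (\<lambda>x. \<theta> m b x + \<theta> m b' x)) \<and>
        (\<forall>m c. \<forall>b\<in>G (l + m). \<theta> m (scale c b) = (\<lambda>x. c * \<theta> m b x)) \<and>
        (\<forall>m n. \<forall>b\<in>G (l + m). \<forall>a\<in>G n.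
            \<theta> (m + n) (b * a) = (\<lambda>x. if x \<in> G (- (m + n)) then \<theta> m b (a * x) else 0))"
    using assms(2) unfolding graded_frobenius_def by blast
  have bij\<theta>: "\<And>m. bij_betw (\<theta> m) (G (l + m)) (kdual scale (G (- m)))" using H by blast
  have add\<theta>: "\<And>m b b'. b\<in>G (l + m) \<Longrightarrow> b'\<in>G (l + m) \<Longrightarrow> \<theta> m (b + b') = (\<lambda>x. \<theta> m b x + \<theta> m b' x)"
    using H by blast
  have sc\<theta>: "\<And>m c b. b\<in>G (l + m) \<Longrightarrow> \<theta> m (scale c b) = (\<lambda>x. c * \<theta> m b x)" using H by blast
  have mul\<theta>: "\<And>m n b a. b\<in>G (l + m) \<Longrightarrow> a\<in>G n \<Longrightarrow>
            \<theta> (m + n) (b * a) = (\<lambda>x. if x \<in> G (- (m + n)) then \<theta> m b (a * x) else 0)"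
    using H by blast
  have KA: "k_algebra scale" using GA unfolding graded_algebra_def by auto
  interpret V: vector_space scale using KA unfolding k_algebra_def by auto
  have bil1: "\<And>c x y. scale c (x * y) = scale c x * y" using KA unfolding k_algebra_def by blast
  have bil2: "\<And>c x y. scale c (x * y) = x * scale c y" using KA unfolding k_algebra_def by blast
  have sub: "\<And>m. V.subspace (G m)" using GA unfolding graded_algebra_def by auto
  have z: "\<forall>n. 0 \<in> G n" using sub V.subspace_0 by blast
  have addG: "\<forall>n a b. a \<in> G n \<longrightarrow> b \<in> G n \<longrightarrow> a + b \<in> G n" using sub V.subspace_add by blast
  have scG: "\<And>n c a. a \<in> G n \<Longrightarrow> scale c a \<in> G n" using sub V.subspace_scale by blast
  have diffG: "\<And>n a b. a \<in> G n \<Longrightarrow> b \<in> G n \<Longrightarrow> a - b \<in> G n" using sub V.subspace_diff by blast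
  have negG: "\<And>m. m < 0 \<Longrightarrow> G m = {0}" using GA unfolding graded_algebra_def by auto
  have mulG: "\<And>m n x y. x \<in> G m \<Longrightarrow> y \<in> G n \<Longrightarrow> x * y \<in> G (m + n)"
    using GA unfolding graded_algebra_def by auto
  have one: "1 \<in> G 0" using GA unfolding graded_algebra_def by auto
  have decomp: "\<And>x. \<exists>c. hom_family G c \<and> x = (\<Sum>m\<in>{m. c m \<noteq> 0}. c m)"
    using GA unfolding graded_algebra_def by blast
  have Aall: "\<And>x. x \<in> A_ge G 0"
  proof -
    fix x
    obtain c where c: "hom_family G c" "x = (\<Sum>m\<in>{m. c m \<noteq> 0}. c m)" using decomp by blast
    have "\<forall>m. m < 0 \<longrightarrow> c m = 0" using c(1) negG unfolding hom_family_def by blast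
    thus "x \<in> A_ge G 0" using c unfolding A_ge_def by blast
  qed
  have Aadd: "\<And>x y i. x \<in> A_ge G i \<Longrightarrow> y \<in> A_ge G i \<Longrightarrow> x + y \<in> A_ge G i"
    using A_ge_add[OF z addG] by blast
  have Asc: "\<And>x c i. x \<in> A_ge G i \<Longrightarrow> scale c x \<in> A_ge G i"
  proof -
    fix x c i assume x: "x \<in> A_ge G i"
    obtain F g where F: "finite F" "\<forall>m\<in>F. g m \<in> G m \<and> i \<le> m" "x = (\<Sum>m\<in>F. g m)"
      using x by (rule A_geE)
    have "scale c x = (\<Sum>m\<in>F. scale c (g m))" using F(3) V.scale_sum_right by simp
    also have "\<dots> \<in> A_ge G i" by (rule A_geI[OF z F(1)]) (use F(2) scG in auto)
    finally show "scale c x \<in> A_ge G i" .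
  qed
  have Aright: "\<And>x a i d. x \<in> A_ge G i \<Longrightarrow> a \<in> G d \<Longrightarrow> x * a \<in> A_ge G (i + d)"
  proof -
    fix x a i d assume x: "x \<in> A_ge G i" and a: "a \<in> G d"
    obtain F g where F: "finite F" "\<forall>m\<in>F. g m \<in> G m \<and> i \<le> m" "x = (\<Sum>m\<in>F. g m)"
      using x by (rule A_geE)
    have "x * a = (\<Sum>m\<in>F. g m * a)" using F(3) by (simp add: sum_distrib_right)
    also have "\<dots> \<in> A_ge G (i + d)"
      by (rule A_ge_sum[OF z addG F(1)]) (use F(2) mulG a G_sub_A_ge[OF z] in force)
    finally show "x * a \<in> A_ge G (i + d)" .
  qed
  have Aleft: "\<And>x b i. x \<in> A_ge G i \<Longrightarrow> b * x \<in> A_ge G i"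
  proof -
    fix x b i assume x: "x \<in> A_ge G i"
    obtain F g where F: "finite F" "\<forall>m\<in>F. g m \<in> G m \<and> i \<le> m" "x = (\<Sum>m\<in>F. g m)"
      using x by (rule A_geE)
    obtain F1 g1 where F1: "finite F1" "\<forall>m\<in>F1. g1 m \<in> G m \<and> 0 \<le> m" "b = (\<Sum>m\<in>F1. g1 m)"
      using Aall[of b] by (rule A_geE)
    have "b * x = (\<Sum>n\<in>F1. \<Sum>m\<in>F. g1 n * g m)" using F(3) F1(3) by (simp add: sum_product)
    also have "\<dots> \<in> A_ge G i"
    proof (rule A_ge_sum[OF z addG F1(1)], intro ballI)
      fix n assume n: "n \<in> F1"
      show "(\<Sum>m\<in>F. g1 n * g m) \<in> A_ge G i"
        by (rule A_ge_sum[OF z addG F(1)]) (use F(2) F1(2) n mulG G_sub_A_ge[OF z] in force)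
    qed
    finally show "b * x \<in> A_ge G i" .
  qed
  define \<phi> where "\<phi> = \<theta> (- l) 1"
  have \<phi>kd: "\<phi> \<in> kdual scale (G l)"
    using bij_betw_apply[OF bij\<theta>[of "- l"]] one unfolding \<phi>_def by simp
  have \<phi>add: "\<And>x y. x \<in> G l \<Longrightarrow> y \<in> G l \<Longrightarrow> \<phi> (x + y) = \<phi> x + \<phi> y"
    using \<phi>kd unfolding kdual_def by blast
  have \<phi>sc: "\<And>c x. x \<in> G l \<Longrightarrow> \<phi> (scale c x) = c * \<phi> x"
    using \<phi>kd unfolding kdual_def by blast
  have \<phi>0: "\<phi> 0 = 0"
  proof -
    have "\<phi> (0 + 0) = \<phi> 0 + \<phi> 0" using \<phi>add z by blast
    hence "\<phi> 0 + \<phi> 0 = \<phi> 0" by (metis add_0)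
    thus ?thesis by (metis add_cancel_left_right)
  qed
  have \<phi>diff: "\<And>x y. x \<in> G l \<Longrightarrow> y \<in> G l \<Longrightarrow> \<phi> (x - y) = \<phi> x - \<phi> y"
  proof -
    fix x y assume "x \<in> G l" "y \<in> G l"
    hence "\<phi> (x - y + y) = \<phi> (x - y) + \<phi> y" using \<phi>add diffG by blast
    thus "\<phi> (x - y) = \<phi> x - \<phi> y" by (simp add: algebra_simps)
  qed
  have L: "\<And>w e. w \<in> G e \<Longrightarrow> \<theta> (e - l) w = (\<lambda>x. if x \<in> G (l - e) then \<phi> (w * x) else 0)"
  proof -
    fix w e assume w: "w \<in> G e"
    have "\<theta> (- l + e) (1 * w) = (\<lambda>x. if x \<in> G (- (- l + e)) then \<theta> (- l) 1 (w * x) else 0)"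
      using mul\<theta>[of 1 "- l" w e] one w by simp
    thus "\<theta> (e - l) w = (\<lambda>x. if x \<in> G (l - e) then \<phi> (w * x) else 0)"
      unfolding \<phi>_def by (simp add: algebra_simps)
  qed
  have Rnd: "\<And>w e. w \<in> G e \<Longrightarrow> w \<noteq> 0 \<Longrightarrow> \<exists>z\<in>G (l - e). \<phi> (z * w) \<noteq> 0"
  proof -
    fix w e assume w: "w \<in> G e" "w \<noteq> 0"
    obtain B where B: "finite B" "B \<subseteq> G e" "V.span B = G e" using LF unfolding locally_finite_def by blast
    obtain \<psi> where \<psi>: "\<forall>x\<in>G e. \<forall>y\<in>G e. \<psi> (x + y) = \<psi> x + \<psi> y" "\<forall>c. \<forall>x\<in>G e. \<psi> (scale c x) = c * \<psi> x"
      "\<forall>x. x \<notin> G e \<longrightarrow> \<psi> x = 0" "\<psi> w \<noteq> 0"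
      using V.exists_functional[OF B(3) w] by blast
    have "\<psi> \<in> kdual scale (G e)" using \<psi> unfolding kdual_def by blast
    then obtain z where z: "z \<in> G (l + - e)" "\<theta> (- e) z = \<psi>"
      using bij\<theta>[of "- e"] unfolding bij_betw_def by force
    have zz: "z \<in> G (l - e)" using z by simp
    have "\<theta> ((l - e) - l) z = (\<lambda>x. if x \<in> G (l - (l - e)) then \<phi> (z * x) else 0)"
      using L[OF zz] .
    hence "\<psi> = (\<lambda>x. if x \<in> G e then \<phi> (z * x) else 0)" using z by simp
    hence "\<phi> (z * w) \<noteq> 0" using w \<psi>(4) by simp
    thus "\<exists>z\<in>G (l - e). \<phi> (z * w) \<noteq> 0" using zz by blast
  qed
  define d where "d = j - i"
  have rm: "\<And>a x. rmult G i a x = (if x \<in> A_ge G i then x * a else 0)" unfolding rmult_def by simp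
  have hom: "\<And>a. a \<in> G d \<Longrightarrow> rmult G i a \<in> graded_left_hom scale G i j"
  proof -
    fix a assume a: "a \<in> G d"
    have "\<forall>x\<in>A_ge G i. x * a \<in> A_ge G j" using Aright[OF _ a, of _ i] unfolding d_def by simp
    moreover have "\<forall>m. \<forall>x\<in>A_ge G i. x \<in> G (i + m) \<longrightarrow> x * a \<in> G (j + m)"
      using mulG[OF _ a] unfolding d_def by (metis add.commute diff_add_cancel add.left_commute)
    ultimately show "rmult G i a \<in> graded_left_hom scale G i j"
      unfolding graded_left_hom_def rm
      using Aadd Asc Aleft by (simp add: distrib_right bil1 mult.assoc)
  qed
  have inj: "inj_on (rmult G i) (G d)"
  proof (rule inj_onI)
    fix a b assume a: "a \<in> G d" and b: "b \<in> G d" and eq: "rmult G i a = rmult G i b"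
    show "a = b"
    proof (rule ccontr)
      assume "a \<noteq> b"
      then obtain y where y: "y \<in> G (l - d)" "\<phi> (y * (a - b)) \<noteq> 0"
        using Rnd[OF diffG[OF a b]] by auto
      have "y \<in> A_ge G i" using G_sub_A_ge[OF z y(1)] assms unfolding d_def by simp
      hence "y * a = y * b" using fun_cong[OF eq, of y] unfolding rm by simp
      hence "y * (a - b) = 0" by (simp add: algebra_simps)
      thus False using y \<phi>0 by simp
    qed
  qed
  have surj: "\<And>f. f \<in> graded_left_hom scale G i j \<Longrightarrow> \<exists>a\<in>G d. f = rmult G i a"
  proof -
    fix f assume f: "f \<in> graded_left_hom scale G i j"
    have fadd: "\<And>x y. x \<in> A_ge G i \<Longrightarrow> y \<in> A_ge G i \<Longrightarrow> f (x + y) = f x + f y"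
      using f unfolding graded_left_hom_def by blast
    have fsc: "\<And>c x. x \<in> A_ge G i \<Longrightarrow> f (scale c x) = scale c (f x)"
      using f unfolding graded_left_hom_def by blast
    have fmul: "\<And>b x. x \<in> A_ge G i \<Longrightarrow> f (b * x) = b * f x"
      using f unfolding graded_left_hom_def by blast
    have fdeg: "\<And>m x. x \<in> A_ge G i \<Longrightarrow> x \<in> G (i + m) \<Longrightarrow> f x \<in> G (j + m)"
      using f unfolding graded_left_hom_def by blast
    have fout: "\<And>x. x \<notin> A_ge G i \<Longrightarrow> f x = 0"
      using f unfolding graded_left_hom_def by blast
    have Gsub: "\<And>y. y \<in> G (l - d) \<Longrightarrow> y \<in> A_ge G i"
      using G_sub_A_ge[OF z] assms unfolding d_def by simp
    have fG: "\<And>y. y \<in> G (l - d) \<Longrightarrow> f y \<in> G l"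
    proof -
      fix y assume y: "y \<in> G (l - d)"
      have "y \<in> G (i + (l - d - i))" using y by simp
      from fdeg[OF Gsub[OF y] this] show "f y \<in> G l" unfolding d_def by simp
    qed
    have ya: "\<And>y a. y \<in> G (l - d) \<Longrightarrow> a \<in> G d \<Longrightarrow> y * a \<in> G l"
      using mulG by fastforce
    define \<psi> where "\<psi> = (\<lambda>y. if y \<in> G (l - d) then \<phi> (f y) else 0)"
    have \<psi>kd: "\<psi> \<in> kdual scale (G (l - d))"
      unfolding kdual_def \<psi>_def
      using fadd Gsub fG \<phi>add addG scG fsc \<phi>sc by auto
    define R where "R = (\<lambda>a y. if y \<in> G (l - d) then \<phi> (y * a) else 0)"
    have bijd: "bij_betw (\<theta> (d - l)) (G d) (kdual scale (G (l - d)))"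
      using bij\<theta>[of "d - l"] by simp
    have Rkd: "\<And>a. a \<in> G d \<Longrightarrow> R a \<in> kdual scale (G (l - d))"
      unfolding kdual_def R_def
      using ya \<phi>add addG scG \<phi>sc by (auto simp: distrib_right bil1[symmetric])
    define S where "S = (\<lambda>a. inv_into (G d) (\<theta> (d - l)) (R a))"
    have S1: "\<And>a. a \<in> G d \<Longrightarrow> S a \<in> G d"
      unfolding S_def using Rkd bijd by (metis bij_betw_def inv_into_into)
    have S2: "\<And>a. a \<in> G d \<Longrightarrow> \<theta> (d - l) (S a) = R a"
      unfolding S_def using Rkd bijd by (metis bij_betw_def f_inv_into_f)
    have injd: "inj_on (\<theta> (d - l)) (G d)" using bijd bij_betw_def by blast
    have GGd: "\<And>x. x \<in> G d \<Longrightarrow> x \<in> G (l + (d - l))" by simp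
    have Sadd: "\<forall>x\<in>G d. \<forall>y\<in>G d. S (x + y) = S x + S y"
    proof (intro ballI)
      fix x y assume x: "x \<in> G d" and y: "y \<in> G d"
      have xy: "x + y \<in> G d" using addG x y by blast
      have "\<theta> (d - l) (S (x + y)) = \<theta> (d - l) (S x + S y)"
        using S2[OF xy] add\<theta>[OF GGd[OF S1[OF x]] GGd[OF S1[OF y]]] S2[OF x] S2[OF y]
        using ya x y \<phi>add unfolding R_def by (auto simp: distrib_left)
      thus "S (x + y) = S x + S y" using injd S1 x y xy addG by (meson inj_onD)
    qed
    have Ssc: "\<forall>c. \<forall>x\<in>G d. S (scale c x) = scale c (S x)"
    proof (intro allI ballI)
      fix c x assume x: "x \<in> G d"
      have cx: "scale c x \<in> G d" using scG x by blast
      have "\<theta> (d - l) (S (scale c x)) = \<theta> (d - l) (scale c (S x))"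
        using S2[OF cx] sc\<theta>[OF GGd[OF S1[OF x]]] S2[OF x]
        using ya x \<phi>sc unfolding R_def by (auto simp: bil2[symmetric])
      thus "S (scale c x) = scale c (S x)" using injd S1 x cx scG by (meson inj_onD)
    qed
    have Sinj: "inj_on S (G d)"
    proof (rule inj_onI)
      fix a b assume a: "a \<in> G d" and b: "b \<in> G d" and eq: "S a = S b"
      have Req: "R a = R b" using S2[OF a] S2[OF b] eq by simp
      show "a = b"
      proof (rule ccontr)
        assume "a \<noteq> b"
        then obtain y where y: "y \<in> G (l - d)" "\<phi> (y * (a - b)) \<noteq> 0"
          using Rnd[OF diffG[OF a b]] by auto
        have "\<phi> (y * a) = \<phi> (y * b)" using fun_cong[OF Req, of y] y unfolding R_def by simp
        moreover have "\<phi> (y * (a - b)) = \<phi> (y * a) - \<phi> (y * b)"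
          using \<phi>diff[OF ya[OF y(1) a] ya[OF y(1) b]] by (simp add: algebra_simps)
        ultimately show False using y by simp
      qed
    qed
    obtain B where B: "finite B" "B \<subseteq> G d" "V.span B = G d" using LF unfolding locally_finite_def by blast
    have Sonto: "S ` G d = G d"
      by (rule V.inj_imp_surj_on[OF B(1) B(3) Sadd Ssc _ Sinj]) (use S1 in auto)
    obtain b where b: "b \<in> G d" "\<theta> (d - l) b = \<psi>" using \<psi>kd bijd unfolding bij_betw_def by force
    obtain a where a: "a \<in> G d" "S a = b" using b(1) Sonto by (metis imageE)
    have Ra: "R a = \<psi>" using S2[OF a(1)] a(2) b(2) by simp
    have key: "\<And>y. y \<in> G (l - d) \<Longrightarrow> \<phi> (y * a) = \<phi> (f y)"
      using Ra unfolding R_def \<psi>_def by (metis (full_types))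
    have homog: "\<And>m h. i \<le> m \<Longrightarrow> h \<in> G m \<Longrightarrow> f h = h * a"
    proof -
      fix m h assume m: "i \<le> m" and h: "h \<in> G m"
      have hA: "h \<in> A_ge G i" using G_sub_A_ge[OF z h m] .
      have "h \<in> G (i + (m - i))" using h by simp
      hence fh: "f h \<in> G (j + (m - i))" using fdeg[OF hA] by blast
      have ha: "h * a \<in> G (j + (m - i))" using mulG[OF h a(1)] unfolding d_def by (simp add: algebra_simps)
      have w: "f h - h * a \<in> G (j + (m - i))" using diffG[OF fh ha] .
      show "f h = h * a"
      proof (rule ccontr)
        assume "f h \<noteq> h * a"
        then obtain zz where zz: "zz \<in> G (l - (j + (m - i)))" "\<phi> (zz * (f h - h * a)) \<noteq> 0"
          using Rnd[OF w] by auto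
        have zh: "zz * h \<in> G (l - d)" using mulG[OF zz(1) h] unfolding d_def by (simp add: algebra_simps)
        have "zz * (f h - h * a) = f (zz * h) - (zz * h) * a"
          using fmul[OF hA] by (simp add: algebra_simps mult.assoc)
        hence "\<phi> (zz * (f h - h * a)) = \<phi> (f (zz * h)) - \<phi> ((zz * h) * a)"
          using \<phi>diff[OF fG[OF zh] ya[OF zh a(1)]] by simp
        thus False using key[OF zh] zz(2) by simp
      qed
    qed
    have "f = rmult G i a"
    proof
      fix x
      show "f x = rmult G i a x"
      proof (cases "x \<in> A_ge G i")
        case False thus ?thesis using fout unfolding rm by simp
      next
        case True
        obtain F g where F: "finite F" "\<forall>m\<in>F. g m \<in> G m \<and> i \<le> m" "x = (\<Sum>m\<in>F. g m)"
          using True by (rule A_geE)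
        have A0: "0 \<in> A_ge G i" using G_sub_A_ge[OF z, of 0 i i] z by simp
        have gA: "\<forall>k\<in>F. g k \<in> A_ge G i" using F(2) G_sub_A_ge[OF z] by blast
        have "f x = (\<Sum>m\<in>F. f (g m))"
          using additive_sum(1)[OF A0 _ _ F(1) gA, of f] Aadd fadd F(3) by blast
        also have "\<dots> = (\<Sum>m\<in>F. g m * a)" using homog F(2) by (intro sum.cong) auto
        also have "\<dots> = x * a" using F(3) by (simp add: sum_distrib_right)
        finally show ?thesis using True unfolding rm by simp
      qed
    qed
    thus "\<exists>a\<in>G d. f = rmult G i a" using a(1) by blast
  qed
  have "bij_betw (rmult G i) (G d) (graded_left_hom scale G i j)"
    unfolding bij_betw_def using inj hom surj by blast
  moreover have "\<forall>a\<in>G d. \<forall>b\<in>G d. rmult G i (a + b) = (\<lambda>x. rmult G i a x + rmult G i b x)"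
    unfolding rm by (auto simp: distrib_left)
  moreover have "\<forall>c. \<forall>a\<in>G d. rmult G i (scale c a) = (\<lambda>x. scale c (rmult G i a x))"
    unfolding rm by (auto simp: bil2[symmetric])
  ultimately show ?thesis unfolding d_def by blast
qed

end
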